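(* The map ${}'\epsilon$ restricts to a bijection ${}'\mathcal X^{0,+}_{N-2}\to{}'E^{0,+}_N$ and to a bijection ${}''\mathcal X^{0,+}_{N-2}\to{}''E^{0,+}_N$.
   Context: Let $N\ge 3$ be an odd integer and $F=\mathbb Z/2\mathbb Z$. For integers $i,j$ let $[i,j]=\{h\in\mathbb Z: i\le h\le j\}$ (empty if $i>j$). Let $S_N=[1,N]$. The set of all subsets of $S_N$ is an $F$-vector space with sum $X+X'=(X\cup X')-(X\cap X')$; let $E_N$ be the subspace of subsets of even cardinality. A $2$-element subset $\{i,j\}\subseteq S_N$ is written $ij$ when either ($i<j$ and $j-i$ odd) or ($i>j$ and $i-j$ even); each $2$-element subset has exactly one such writing. Let $\mathcal P_N$ be the set of all finite sets $B$ of pairwise disjoint $2$-element subsets of $S_N$; for $B\in\mathcal P_N$ let $\mathrm{supp}(B)=\bigcup_{X\in B}X$, $B^0=\{\{i,j\}\in B: i-j\text{ even}\}$, $B^1=\{\{i,j\}\in B: i-j\text{ odd}\}$. A set $X\subseteq S_N$ is $0$-covered (resp. $1$-covered) by $B^1$ if there are $a_1b_1,\dots,a_sb_s\in B^1$ ($s\ge 0$, so $a_r<b_r$) with $X=[a_1,b_1]\sqcup\dots\sqcup[a_s,b_s]$ (resp. $X=[a_1,b_1]\sqcup\dots\sqcup[a_s,b_s]\sqcup\{u\}$ for some $u$), disjoint unions. Let ${}^*\mathcal P_N$ be the set of $B\in\mathcal P_N$ such that: for every $ij\in B^1$ the set $[i+1,j-1]$ is $0$-covered by $B^1$; and there is a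 sequence $i_*(B)=(i_1,\dots,i_{2s})$ in $S_N$ with $B^0=\{i_{2s}i_1,i_{2s-1}i_2,\dots,i_{s+1}i_s\}$ (so $s=|B^0|$; the sequence is unique) such that, if $s\ge1$, each of $[i_1+1,i_2-1],\dots,[i_{s-1}+1,i_s-1],[i_{s+1}+1,i_{s+2}-1],\dots,[i_{2s-1}+1,i_{2s}-1]$ is $0$-covered by $B^1$. For $B\in{}^*\mathcal P_N$ with $i_*(B)=(i_1,\dots,i_{2s})$ consider: (I) $s=0$, or $s\ge1$ and $[1,i_1-1]$ and $[i_{2s}+1,N]$ are $0$-covered by $B^1$; (II) $N\notin\mathrm{supp}(B)$ and either $s=0$, or $s$ is odd and either (i) $[1,i_1-1]$ is $1$-covered and $[i_{2s}+1,N-1]$ is $0$-covered by $B^1$, or (ii) $[1,i_1-1]$ is $0$-covered and $[i_{2s}+1,N-1]$ is $1$-covered by $B^1$; (III) (I) holds and, if $s$ is even then $\{i,N\}\in B$ for some even $i$, if $s$ is odd then $\{i,N\}\in B$ for some odd $i$. Let $\mathcal X^+_{N-2}$, $\mathcal X^-_{N-2}$ be the sets of $B\in{}^*\mathcal P_N$ satisfying (II), (III) respectively, and $\mathcal X_{N-2}=\mathcal X^+_{N-2}\sqcup\mathcal X^-_{N-2}$. For $B\in\mathcal X^+_{N-2}$ with $s\ge1$ there is a unique $u_B$: in case (i), $u_B\in[1,i_1-1]$ with $[1,u_B-1]$, $[u_B+1,i_1-1]$ $0$-covered by $B^1$ ($u_B$ odd); in case (ii), $u_B\in[i_{2s}+1,N-1]$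 with $[i_{2s}+1,u_B-1]$, $[u_B+1,N-1]$ $0$-covered by $B^1$ ($u_B$ even). Put $[[ij]]=[i,j]$ if $i<j$ and $[[ij]]=[i,N]\cup[1,j]$ if $i>j$. For $B\in\mathcal X_{N-2}$ define ${}'\epsilon(B)\in E_N$: ${}'\epsilon(B)=\sum_{ij\in B}[[ij]]$ if $B\in\mathcal X^-_{N-2}$ or if $B\in\mathcal X^+_{N-2}$ with $|B^0|=0$; ${}'\epsilon(B)=\sum_{ij\in B}[[ij]]+[u_B,N]$ if $B\in\mathcal X^+_{N-2}$, $|B^0|$ odd, $u_B$ even; ${}'\epsilon(B)=\sum_{ij\in B}[[ij]]+\{N\}+[1,u_B]$ if $B\in\mathcal X^+_{N-2}$, $|B^0|$ odd, $u_B$ odd. Let $\mathcal X^{0,+}_{N-2}=\{B\in\mathcal X^+_{N-2}:|B^0|=0\}$, ${}'\mathcal X^{0,+}_{N-2}=\{B\in\mathcal X^{0,+}_{N-2}: N-1\notin\mathrm{supp}(B)\}$, ${}''\mathcal X^{0,+}_{N-2}=\{B\in\mathcal X^{0,+}_{N-2}: N-1\in\mathrm{supp}(B)\}$. For $X\in E_N$ let $\gamma(X)=|\{x\in X: x\text{ even}\}|-|\{x\in X:x\text{ odd}\}|$; let $E^{0,+}_N=\{X\in E_N: N\notin X,\ \gamma(X)=0\}$, ${}'E^{0,+}_N=\{X\in E^{0,+}_N:N-1\notin X\}$, ${}''E^{0,+}_N=\{X\in E^{0,+}_N:N-1\in X\}$. *)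

theory Defs
  imports "HOL-Library.Disjoint_Sets"
begin

definition PN :: "nat \<Rightarrow> nat set set set" where
  "PN N = {B. finite B \<and> (\<forall>p\<in>B. p \<subseteq> {1..N} \<and> card p = 2)
              \<and> (\<forall>p\<in>B. \<forall>q\<in>B. p \<noteq> q \<longrightarrow> p \<inter> q = {})}"

definition supp :: "nat set set \<Rightarrow> nat set" where
  "supp B = \<Union>B"

definition B0 :: "nat set set \<Rightarrow> nat set set" where
  "B0 B = {p\<in>B. even (Max p - Min p)}"

definition B1 :: "nat set set \<Rightarrow> nat set set" where
  "B1 B = {p\<in>B. odd (Max p - Min p)}"

definition wr :: "nat set \<Rightarrow> nat \<times> nat" where
  "wr p = (if odd (Max p - Min p) then (Min p, Max p) else (Max p, Min p))"

definition ivl :: "nat set \<Rightarrow> nat set" where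
  "ivl p = {fst (wr p)..snd (wr p)}"

definition zero_cov :: "nat set set \<Rightarrow> nat set \<Rightarrow> bool" where
  "zero_cov B X \<longleftrightarrow> (\<exists>C \<subseteq> B1 B. finite C \<and> disjoint_family_on ivl C \<and> X = \<Union>(ivl ` C))"

definition one_cov :: "nat set set \<Rightarrow> nat set \<Rightarrow> bool" where
  "one_cov B X \<longleftrightarrow> (\<exists>C \<subseteq> B1 B. \<exists>u. finite C \<and> disjoint_family_on ivl C
        \<and> u \<notin> \<Union>(ivl ` C) \<and> X = \<Union>(ivl ` C) \<union> {u})"

text \<open>A list xs = (i_1,...,i_{2s}) (0-indexed) is an admissible sequence for B:
  B^0 = { i_{2s} i_1, ..., i_{s+1} i_s } (with these writings), and the gaps
  [i_k+1, i_{k+1}-1] (k=1..s-1, s+1..2s-1) are 0-covered by B^1.\<close>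
definition seqok :: "nat set set \<Rightarrow> nat list \<Rightarrow> bool" where
  "seqok B xs \<longleftrightarrow> (let s = length xs div 2 in
      even (length xs)
    \<and> B0 B = (\<lambda>k. {xs!(2*s-1-k), xs!k}) ` {..<s}
    \<and> (\<forall>k<s. wr {xs!(2*s-1-k), xs!k} = (xs!(2*s-1-k), xs!k))
    \<and> (\<forall>k. k + 1 < s \<longrightarrow> zero_cov B {xs!k<..<xs!(k+1)})
    \<and> (\<forall>k. s \<le> k \<and> k + 1 < 2*s \<longrightarrow> zero_cov B {xs!k<..<xs!(k+1)}))"

definition starPN :: "nat \<Rightarrow> nat set set set" where
  "starPN N = {B\<in>PN N. (\<forall>p\<in>B1 B. zero_cov B {fst (wr p)<..<snd (wr p)})
                       \<and> (\<exists>xs. seqok B xs)}"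

definition istar :: "nat set set \<Rightarrow> nat list" where
  "istar B = (THE xs. seqok B xs)"

definition sB :: "nat set set \<Rightarrow> nat" where
  "sB B = card (B0 B)"

definition ifirst :: "nat set set \<Rightarrow> nat" where
  "ifirst B = hd (istar B)"
definition ilast :: "nat set set \<Rightarrow> nat" where
  "ilast B = last (istar B)"

definition condI :: "nat \<Rightarrow> nat set set \<Rightarrow> bool" where
  "condI N B \<longleftrightarrow> sB B = 0 \<or>
     (sB B \<ge> 1 \<and> zero_cov B {1..<ifirst B} \<and> zero_cov B {ilast B<..N})"

definition condII :: "nat \<Rightarrow> nat set set \<Rightarrow> bool" where
  "condII N B \<longleftrightarrow> N \<notin> supp B \<and> (sB B = 0 \<or>
     (odd (sB B) \<and>
       ((one_cov B {1..<ifirst B} \<and> zero_cov B {ilast B<..<N}) \<or>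
        (zero_cov B {1..<ifirst B} \<and> one_cov B {ilast B<..<N}))))"

definition condIII :: "nat \<Rightarrow> nat set set \<Rightarrow> bool" where
  "condIII N B \<longleftrightarrow> condI N B
     \<and> (even (sB B) \<longrightarrow> (\<exists>i. even i \<and> {i, N} \<in> B))
     \<and> (odd (sB B) \<longrightarrow> (\<exists>i. odd i \<and> {i, N} \<in> B))"

definition Xplus :: "nat \<Rightarrow> nat set set set" where
  "Xplus N = {B\<in>starPN N. condII N B}"
definition Xminus :: "nat \<Rightarrow> nat set set set" where
  "Xminus N = {B\<in>starPN N. condIII N B}"
definition XN :: "nat \<Rightarrow> nat set set set" where
  "XN N = Xplus N \<union> Xminus N"

definition uB :: "nat \<Rightarrow> nat set set \<Rightarrow> nat" where
  "uB N B = (if one_cov B {1..<ifirst B} \<and> zero_cov B {ilast B<..<N}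
     then (THE u. u \<in> {1..<ifirst B} \<and> zero_cov B {1..<u} \<and> zero_cov B {u<..<ifirst B})
     else (THE u. u \<in> {ilast B<..<N} \<and> zero_cov B {ilast B<..<u} \<and> zero_cov B {u<..<N}))"

definition dbr :: "nat \<Rightarrow> nat set \<Rightarrow> nat set" where
  "dbr N p = (let (i, j) = wr p in if i < j then {i..j} else {i..N} \<union> {1..j})"

text \<open>Sum in the F_2-vector space of subsets (symmetric difference) of [[ij]] over ij in B:
  x lies in the sum iff it lies in an odd number of summands.\<close>
definition ssum :: "nat \<Rightarrow> nat set set \<Rightarrow> nat set" where
  "ssum N B = {x. odd (card {p\<in>B. x \<in> dbr N p})}"

definition symd :: "nat set \<Rightarrow> nat set \<Rightarrow> nat set" where
  "symd X Y = (X \<union> Y) - (X \<inter> Y)"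

definition eps' :: "nat \<Rightarrow> nat set set \<Rightarrow> nat set" where
  "eps' N B = (if B \<in> Xminus N \<or> (B \<in> Xplus N \<and> card (B0 B) = 0) then ssum N B
     else if even (uB N B) then symd (ssum N B) {uB N B..N}
     else symd (symd (ssum N B) {N}) {1..uB N B})"

definition EN :: "nat \<Rightarrow> nat set set" where
  "EN N = {X. X \<subseteq> {1..N} \<and> even (card X)}"

definition gamma :: "nat set \<Rightarrow> int" where
  "gamma X = int (card {x\<in>X. even x}) - int (card {x\<in>X. odd x})"

definition E0p :: "nat \<Rightarrow> nat set set" where
  "E0p N = {X\<in>EN N. N \<notin> X \<and> gamma X = 0}"
definition E0p' :: "nat \<Rightarrow> nat set set" where
  "E0p' N = {X\<in>E0p N. N - 1 \<notin> X}"
definition E0p'' :: "nat \<Rightarrow> nat set set" where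
  "E0p'' N = {X\<in>E0p N. N - 1 \<in> X}"

definition X0p :: "nat \<Rightarrow> nat set set set" where
  "X0p N = {B\<in>Xplus N. card (B0 B) = 0}"
definition X0p' :: "nat \<Rightarrow> nat set set set" where
  "X0p' N = {B\<in>X0p N. N - 1 \<notin> supp B}"
definition X0p'' :: "nat \<Rightarrow> nat set set set" where
  "X0p'' N = {B\<in>X0p N. N - 1 \<in> supp B}"

end

theory Submission
  imports Defs
begin

definition I2 :: "nat set \<Rightarrow> nat set" where "I2 p = {Min p..Max p}"
definition cov2 :: "nat set set \<Rightarrow> nat set \<Rightarrow> bool" where
 "cov2 B Z \<longleftrightarrow> (\<exists>C\<subseteq>B. finite C \<and> disjoint_family_on I2 C \<and> Z = \<Union>(I2 ` C))"
definition okp :: "nat \<Rightarrow> nat set \<Rightarrow> bool" where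
 "okp m p \<longleftrightarrow> (\<exists>a b. p = {a,b} \<and> 1 \<le> a \<and> a < b \<and> b \<le> m \<and> odd (b - a))"
definition GS :: "nat \<Rightarrow> nat set set set" where
 "GS m = {B. finite B \<and> (\<forall>p\<in>B. okp m p) \<and> (\<forall>p\<in>B. \<forall>q\<in>B. p \<noteq> q \<longrightarrow> p \<inter> q = {})
   \<and> (\<forall>p\<in>B. cov2 B {Min p<..<Max p})}"
definition SS :: "nat set set \<Rightarrow> nat set" where "SS B = {x. odd (card {p\<in>B. x \<in> I2 p})}"

lemma okpE:
  assumes "okp m p"
  obtains a b where "p = {a,b}" "1 \<le> a" "a < b" "b \<le> m" "odd (b - a)" "Min p = a" "Max p = b"
  using assms unfolding okp_def by auto

lemma I2_sub:
  assumes ok: "\<And>p. p\<in>B \<Longrightarrow> okp m p" and cv: "\<And>p. p\<in>B \<Longrightarrow> cov2 B {Min p<..<Max p}"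
  shows "p \<in> B \<Longrightarrow> I2 p \<subseteq> \<Union>B"
proof (induction "Max p - Min p" arbitrary: p rule: less_induct)
  case less
  obtain a b where p: "p = {a,b}" "a<b" "Min p = a" "Max p = b" using ok[OF less.prems] by (rule okpE)
  show ?case
  proof
    fix x assume x: "x \<in> I2 p"
    show "x \<in> \<Union>B"
    proof (cases "x = a \<or> x = b")
      case True thus ?thesis using less.prems p by auto
    next
      case False
      hence xi: "x \<in> {Min p<..<Max p}" using x p by (auto simp: I2_def)
      then obtain C where C: "C \<subseteq> B" "{Min p<..<Max p} = \<Union>(I2 ` C)"
        using cv[OF less.prems] unfolding cov2_def by auto
      then obtain q where q: "q\<in>C" "x \<in> I2 q" using xi by auto
      have sub: "I2 q \<subseteq> {Min p<..<Max p}" using C q by auto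
      obtain c d where qq: "Min q = c" "Max q = d" "c < d" using ok[of q] C q by (metis okpE subsetD)
      have "c \<in> I2 q" "d \<in> I2 q" using qq by (auto simp: I2_def)
      hence "Min q \<in> {Min p<..<Max p}" "Max q \<in> {Min p<..<Max p}" using sub qq by auto
      hence "Max q - Min q < Max p - Min p" using qq by auto
      then have "I2 q \<subseteq> \<Union>B" using less.hyps C q by auto
      thus ?thesis using q by auto
    qed
  qed
qed

lemma nocross:
  assumes ok: "\<And>p. p\<in>B \<Longrightarrow> okp m p" and cv: "\<And>p. p\<in>B \<Longrightarrow> cov2 B {Min p<..<Max p}"
    and dj: "\<And>p q. p\<in>B \<Longrightarrow> q\<in>B \<Longrightarrow> p \<noteq> q \<Longrightarrow> p \<inter> q = {}"
  shows "p \<in> B \<Longrightarrow> q \<in> B \<Longrightarrow> p \<noteq> q \<Longrightarrow> x \<in> q \<Longrightarrow> x \<in> I2 p \<Longrightarrow> Min p < Min q \<and> Max q < Max p"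
proof (induction "Max p - Min p" arbitrary: p rule: less_induct)
  case less
  obtain a b where p: "p = {a,b}" "a<b" "Min p = a" "Max p = b" using ok[OF less.prems(1)] by (rule okpE)
  have "x \<notin> p" using dj[OF less.prems(1,2,3)] less.prems(4) by auto
  hence xi: "x \<in> {Min p<..<Max p}" using less.prems(5) p by (auto simp: I2_def)
  then obtain C where C: "C \<subseteq> B" "{Min p<..<Max p} = \<Union>(I2 ` C)"
    using cv[OF less.prems(1)] unfolding cov2_def by auto
  then obtain r where r: "r\<in>C" "x \<in> I2 r" using xi by auto
  have sub: "I2 r \<subseteq> {Min p<..<Max p}" using C r by auto
  obtain c d where rr: "Min r = c" "Max r = d" "c < d" using ok[of r] C r by (metis okpE subsetD)
  have cd: "c \<in> I2 r" "d \<in> I2 r" using rr by (auto simp: I2_def)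
  show ?case
  proof (cases "r = q")
    case True
    thus ?thesis using cd sub rr by auto
  next
    case False
    have "Min r \<in> {Min p<..<Max p}" "Max r \<in> {Min p<..<Max p}" using sub rr cd by auto
    hence "Max r - Min r < Max p - Min p" using rr by auto
    from less.hyps[OF this] have "Min r < Min q \<and> Max q < Max r"
      using C r False less.prems by auto
    thus ?thesis using sub cd rr by auto
  qed
qed

fun run2 :: "nat set \<Rightarrow> nat \<Rightarrow> nat set set \<times> nat set" where
 "run2 X 0 = ({}, {})"
| "run2 X (Suc y) = (case run2 X y of (B, U) \<Rightarrow>
    if card U = 0 \<and> Suc y \<notin> X then (B, U)
    else if even (card U) = (Suc y \<in> X) then (B, insert (Suc y) U)
    else (insert {Max U, Suc y} B, U - {Max U}))"

lemma GS_D: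
  assumes "B \<in> GS m"
  shows "finite B" "\<And>p. p\<in>B \<Longrightarrow> okp m p" "\<And>p. p\<in>B \<Longrightarrow> cov2 B {Min p<..<Max p}"
    "\<And>p q. p\<in>B \<Longrightarrow> q\<in>B \<Longrightarrow> p \<noteq> q \<Longrightarrow> p \<inter> q = {}"
  using assms unfolding GS_def by auto

lemma okp_mem: "okp m p \<Longrightarrow> Min p \<in> p \<and> Max p \<in> p \<and> Min p < Max p \<and> 1 \<le> Min p \<and> Max p \<le> m"
  by (erule okpE) auto

lemma same_pair:
  assumes "\<And>p q. p\<in>B \<Longrightarrow> q\<in>B \<Longrightarrow> p \<noteq> q \<Longrightarrow> p \<inter> q = {}"
    "p \<in> B" "q \<in> B" "x \<in> p" "x \<in> q"
  shows "p = q"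
  using assms by blast

lemma run_SS:
  assumes G: "B \<in> GS m"
  shows "y \<le> m \<Longrightarrow> run2 (SS B) y = ({p\<in>B. Max p \<le> y}, Min ` {p\<in>B. Min p \<le> y \<and> y < Max p})"
proof (induction y)
  case 0
  have h: "\<And>p. p \<in> B \<Longrightarrow> 0 < Min p \<and> 0 < Max p" using okp_mem GS_D(2)[OF G] by fastforce
  have "{p\<in>B. Max p \<le> 0} = {}" "{p\<in>B. Min p \<le> 0 \<and> 0 < Max p} = {}"
    by (auto dest: h)
  then show ?case by simp
next
  case (Suc y)
  note fin = GS_D(1)[OF G] and ok = GS_D(2)[OF G] and cv = GS_D(3)[OF G] and dj = GS_D(4)[OF G]
  have mem: "\<And>p. p \<in> B \<Longrightarrow> Min p \<in> p \<and> Max p \<in> p \<and> Min p < Max p \<and> 1 \<le> Min p \<and> Max p \<le> m"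
    using ok okp_mem by blast
  have injM: "inj_on Min B"
  proof (rule inj_onI)
    fix p q assume "p \<in> B" "q \<in> B" "Min p = Min q"
    thus "p = q" using same_pair[where B=B and p=p and q=q and x="Min p", OF dj] mem by metis
  qed
  have injX: "inj_on Max B"
  proof (rule inj_onI)
    fix p q assume "p \<in> B" "q \<in> B" "Max p = Max q"
    thus "p = q" using same_pair[where B=B and p=p and q=q and x="Max p", OF dj] mem by metis
  qed
  define X where "X = SS B"
  define Sp where "Sp = {p\<in>B. Min p \<le> y \<and> y < Max p}"
  define By where "By = {p\<in>B. Max p \<le> y}"
  have IH: "run2 X y = (By, Min ` Sp)" using Suc X_def Sp_def By_def by auto
  have cardU: "card (Min ` Sp) = card Sp" using card_image[OF inj_on_subset[OF injM]] Sp_def by auto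
  have finSp: "finite Sp" using fin Sp_def by auto
  have isub: "\<And>p. p \<in> B \<Longrightarrow> I2 p \<subseteq> \<Union>B" using I2_sub[OF ok cv] by blast
  have ncr: "\<And>p q x. p \<in> B \<Longrightarrow> q \<in> B \<Longrightarrow> p \<noteq> q \<Longrightarrow> x \<in> q \<Longrightarrow> x \<in> I2 p \<Longrightarrow> Min p < Min q \<and> Max q < Max p"
    using nocross[OF ok cv dj] by blast
  show ?case
  proof (cases "Suc y \<in> \<Union>B")
    case False
    have sp0: "Sp = {}"
    proof (rule ccontr)
      assume "Sp \<noteq> {}"
      then obtain q where q: "q \<in> B" "Min q \<le> y" "y < Max q" using Sp_def by auto
      hence "Suc y \<in> I2 q" by (auto simp: I2_def)
      thus False using isub[OF q(1)] False by auto
    qed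
    have d0: "{p\<in>B. Suc y \<in> I2 p} = {}" using isub False by auto
    have c0: "card {p\<in>B. Suc y \<in> I2 p} = 0" by (subst d0) simp
    have nX: "Suc y \<notin> X" unfolding X_def SS_def mem_Collect_eq c0 by simp
    have r: "run2 X (Suc y) = (By, Min ` Sp)" using IH nX sp0 by simp
    have "{p\<in>B. Max p \<le> Suc y} = By" using False mem By_def by (auto simp: le_Suc_eq) (metis UnionI)
    moreover have "{p\<in>B. Min p \<le> Suc y \<and> Suc y < Max p} = {}" using d0 by (auto simp: I2_def)
    ultimately show ?thesis using r sp0 X_def by simp
  next
    case True
    then obtain p0 where p0: "p0 \<in> B" "Suc y \<in> p0" by auto
    obtain a b where ab: "p0 = {a,b}" "Min p0 = a" "Max p0 = b" "a < b" using ok[OF p0(1)] by (rule okpE) auto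
    show ?thesis
    proof (cases "Suc y = a")
      case True
      have D: "{p\<in>B. Suc y \<in> I2 p} = insert p0 Sp"
      proof -
        have "q \<in> insert p0 Sp" if "q \<in> B" "Suc y \<in> I2 q" for q
        proof (cases "q = p0")
          case False
          hence "q \<inter> p0 = {}" using dj that p0 by auto
          hence "Min q \<noteq> Suc y" "Max q \<noteq> Suc y" using mem[OF that(1)] p0 by auto
          thus ?thesis using that Sp_def by (auto simp: I2_def)
        qed auto
        moreover have "Suc y \<in> I2 q" if "q \<in> Sp" for q
        proof -
          have q: "q \<in> B" "Min q \<le> y" "y < Max q" using that Sp_def by auto
          show ?thesis using q by (auto simp: I2_def)
        qed
        ultimately show ?thesis using p0 True ab Sp_def by (auto simp: I2_def)
      qed
      have nin: "p0 \<notin> Sp" using Sp_def True ab by auto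
      have cD: "card {p\<in>B. Suc y \<in> I2 p} = Suc (card Sp)" using D nin finSp by simp
      have xX: "(Suc y \<in> X) = even (card Sp)" unfolding X_def SS_def using cD by simp
      have r: "run2 X (Suc y) = (By, insert (Suc y) (Min ` Sp))" using IH xX cardU by auto
      have nm: "Max q \<noteq> Suc y" if "q \<in> B" for q
      proof
        assume "Max q = Suc y"
        hence "q = p0" using same_pair[where B=B and p=q and q=p0 and x="Suc y", OF dj] that p0 mem by metis
        thus False using \<open>Max q = Suc y\<close> True ab by simp
      qed
      have "{p\<in>B. Max p \<le> Suc y} = By" using nm By_def by (auto simp: le_Suc_eq)
      moreover have "{p\<in>B. Min p \<le> Suc y \<and> Suc y < Max p} = insert p0 Sp"
      proof (rule set_eqI)
        fix q
        have mn0: "q = p0" if "q \<in> B" "Min q = Suc y"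
          using same_pair[where B=B and p=q and q=p0 and x="Suc y", OF dj] that p0 mem by metis
        show "q \<in> {p\<in>B. Min p \<le> Suc y \<and> Suc y < Max p} \<longleftrightarrow> q \<in> insert p0 Sp"
        proof
          assume q: "q \<in> {p\<in>B. Min p \<le> Suc y \<and> Suc y < Max p}"
          show "q \<in> insert p0 Sp"
          proof (cases "Min q = Suc y")
            case True thus ?thesis using mn0 q by auto
          next
            case False thus ?thesis using q Sp_def by auto
          qed
        next
          assume q: "q \<in> insert p0 Sp"
          show "q \<in> {p\<in>B. Min p \<le> Suc y \<and> Suc y < Max p}"
          proof (cases "q = p0")
            case True thus ?thesis using p0 ab \<open>Suc y = a\<close> by auto
          next
            case False
            hence "q \<in> Sp" using q by auto
            hence "q \<in> B" "Min q \<le> y" "y < Max q" using Sp_def by auto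
            moreover have "Max q \<noteq> Suc y" using nm \<open>q \<in> B\<close> by auto
            ultimately show ?thesis by auto
          qed
        qed
      qed
      ultimately show ?thesis using r X_def True ab by simp
    next
      case False
      hence yb: "Suc y = b" using p0 ab by auto
      have D: "{p\<in>B. Suc y \<in> I2 p} = Sp"
      proof -
        have "q \<in> Sp" if "q \<in> B" "Suc y \<in> I2 q" for q
        proof (cases "q = p0")
          case False
          hence "q \<inter> p0 = {}" using dj that p0 by auto
          hence "Min q \<noteq> Suc y" "Max q \<noteq> Suc y" using mem[OF that(1)] p0 by auto
          thus ?thesis using that Sp_def by (auto simp: I2_def)
        next
          case True thus ?thesis using Sp_def that ab yb by auto
        qed
        moreover have "Suc y \<in> I2 q" if "q \<in> Sp" for q
          using that Sp_def by (auto simp: I2_def)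
        ultimately show ?thesis using Sp_def by auto
      qed
      have p0S: "p0 \<in> Sp" using Sp_def p0 ab yb by auto
      have cpos: "card Sp \<noteq> 0" using p0S finSp by auto
      have xX: "(Suc y \<in> X) = odd (card Sp)" unfolding X_def SS_def using D by simp
      have mx: "Max (Min ` Sp) = a"
      proof (rule Max_eqI)
        show "finite (Min ` Sp)" using finSp by simp
        show "a \<in> Min ` Sp" using p0S ab by force
        fix u assume "u \<in> Min ` Sp"
        then obtain q where q: "q \<in> Sp" "u = Min q" by auto
        show "u \<le> a"
        proof (rule ccontr)
          assume "\<not> u \<le> a"
          hence "q \<noteq> p0" using q ab by auto
          moreover have "Min q \<in> I2 p0" using q Sp_def ab yb \<open>\<not> u \<le> a\<close> by (auto simp: I2_def)
          ultimately have "Max q < Max p0" using ncr[of p0 q "Min q"] p0 q Sp_def mem by auto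
          thus False using q Sp_def ab yb by auto
        qed
      qed
      have r: "run2 X (Suc y) = (insert {a, Suc y} By, Min ` Sp - {a})" using IH xX cardU cpos mx by auto
      have mx0: "q = p0" if "q \<in> B" "Max q = Suc y" for q
        using inj_onD[OF injX, of q p0] that p0 ab yb by auto
      have "{p\<in>B. Max p \<le> Suc y} = insert p0 By"
        using By_def p0 ab yb by (auto simp: le_Suc_eq dest: mx0)
      moreover have "{p\<in>B. Min p \<le> Suc y \<and> Suc y < Max p} = Sp - {p0}"
      proof (rule set_eqI)
        fix q
        have mn0: "q = p0" if "q \<in> B" "Min q = Suc y"
          using same_pair[where B=B and p=q and q=p0 and x="Suc y", OF dj] that p0 mem by metis
        show "q \<in> {p\<in>B. Min p \<le> Suc y \<and> Suc y < Max p} \<longleftrightarrow> q \<in> Sp - {p0}"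
        proof
          assume q: "q \<in> {p\<in>B. Min p \<le> Suc y \<and> Suc y < Max p}"
          hence "q \<noteq> p0" using ab yb by auto
          hence "Min q \<noteq> Suc y" using mn0 q by auto
          thus "q \<in> Sp - {p0}" using q \<open>q \<noteq> p0\<close> Sp_def by auto
        next
          assume q: "q \<in> Sp - {p0}"
          hence "Max q \<noteq> Suc y" using mx0 Sp_def by auto
          thus "q \<in> {p\<in>B. Min p \<le> Suc y \<and> Suc y < Max p}" using q Sp_def by auto
        qed
      qed
      moreover have "Min ` (Sp - {p0}) = Min ` Sp - {a}"
      proof -
        have "Min ` (Sp - {p0}) = Min ` Sp - Min ` {p0}"
          by (rule inj_on_image_set_diff[OF injM]) (use Sp_def p0 in auto)
        thus ?thesis using ab by simp
      qed
      ultimately show ?thesis using r X_def ab yb by simp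
    qed
  qed
qed

lemma cov2_mono: "cov2 B Z \<Longrightarrow> B \<subseteq> B' \<Longrightarrow> cov2 B' Z"
  unfolding cov2_def by blast

lemma cov2_empty: "cov2 B {}"
  unfolding cov2_def by (rule exI[of _ "{}"]) (auto simp: disjoint_family_on_def)

lemma cov2_add:
  assumes "cov2 B Z" "p \<in> B" "Z \<inter> I2 p = {}" "I2 p \<noteq> {}"
  shows "cov2 B (Z \<union> I2 p)"
proof -
  obtain C where C: "C \<subseteq> B" "finite C" "disjoint_family_on I2 C" "Z = \<Union>(I2 ` C)"
    using assms(1) unfolding cov2_def by auto
  have pC: "p \<notin> C" using C(4) assms(3,4) by auto
  have "disjoint_family_on I2 (insert p C)"
    using C(3) C(4) assms(3) unfolding disjoint_family_on_def by auto
  moreover have "Z \<union> I2 p = \<Union>(I2 ` insert p C)" using C(4) by auto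
  ultimately show ?thesis unfolding cov2_def using C assms(2)
    by (intro exI[of _ "insert p C"]) auto
qed

lemma cov2_even:
  assumes ok: "\<And>p. p \<in> B \<Longrightarrow> okp m p" and c: "cov2 B Z"
  shows "finite Z \<and> even (card Z)"
proof -
  obtain C where C: "C \<subseteq> B" "finite C" "disjoint_family_on I2 C" "Z = \<Union>(I2 ` C)"
    using c unfolding cov2_def by auto
  have fi: "\<And>p. p \<in> C \<Longrightarrow> finite (I2 p)" by (simp add: I2_def)
  have ev: "\<And>p. p \<in> C \<Longrightarrow> even (card (I2 p))"
  proof -
    fix p assume "p \<in> C"
    hence "okp m p" using ok C(1) by auto
    then obtain a b where "Min p = a" "Max p = b" "a < b" "odd (b - a)" by (rule okpE) auto
    thus "even (card (I2 p))" by (auto simp: I2_def)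
  qed
  have "card Z = (\<Sum>p\<in>C. card (I2 p))"
    using C(2,3,4) fi by (simp add: card_UN_disjoint disjoint_family_on_def)
  moreover have "even (\<Sum>p\<in>C. card (I2 p))" using ev by (simp add: dvd_sum)
  ultimately show ?thesis using C fi by auto
qed

lemma okp_mono: "okp m p \<Longrightarrow> m \<le> m' \<Longrightarrow> okp m' p"
  unfolding okp_def by fastforce

lemma gamma_insert:
  assumes "finite A" "x \<notin> A"
  shows "gamma (insert x A) = gamma A + (if even x then 1 else -1)"
proof (cases "even x")
  case True
  have "{z\<in>insert x A. even z} = insert x {z\<in>A. even z}" "{z\<in>insert x A. odd z} = {z\<in>A. odd z}"
    using True by auto
  thus ?thesis using True assms by (simp add: gamma_def)
next
  case False
  have "{z\<in>insert x A. even z} = {z\<in>A. even z}" "{z\<in>insert x A. odd z} = insert x {z\<in>A. odd z}"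
    using False by auto
  thus ?thesis using False assms by (simp add: gamma_def)
qed

lemma gamma_all_even: "\<forall>x\<in>A. even x \<Longrightarrow> gamma A = int (card A)"
proof -
  assume "\<forall>x\<in>A. even x"
  hence e: "{x\<in>A. even x} = A" "{x\<in>A. odd x} = {}" by auto
  show ?thesis unfolding gamma_def e by simp
qed

lemma gamma_all_odd: "\<forall>x\<in>A. odd x \<Longrightarrow> gamma A = - int (card A)"
proof -
  assume "\<forall>x\<in>A. odd x"
  hence e: "{x\<in>A. even x} = {}" "{x\<in>A. odd x} = A" by auto
  show ?thesis unfolding gamma_def e by simp
qed

definition Inv :: "nat set \<Rightarrow> nat \<Rightarrow> nat set set \<Rightarrow> nat set \<Rightarrow> bool" where
"Inv X y B U \<longleftrightarrow>
   finite B \<and> (\<forall>p\<in>B. okp y p) \<and> (\<forall>p\<in>B. \<forall>q\<in>B. p\<noteq>q \<longrightarrow> p\<inter>q={}) \<and> U \<subseteq> {1..y} \<and> U \<inter> \<Union>B = {}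
 \<and> (\<forall>p\<in>B. cov2 B {Min p<..<Max p})
 \<and> (\<forall>u\<in>U. \<forall>v. (v\<in>U \<or> v = Suc y) \<longrightarrow> u < v \<longrightarrow> (\<forall>w\<in>U. \<not>(u<w \<and> w<v)) \<longrightarrow> cov2 B {u<..<v})
 \<and> (\<forall>x\<in>{1..y}. (x\<in>X) = odd (card {p\<in>B. x\<in>I2 p} + card {u\<in>U. u\<le>x}))
 \<and> (\<forall>u\<in>U. (u\<in>X) = even (card {v\<in>U. v<u}))
 \<and> gamma (X \<inter> {1..y}) = gamma (X \<inter> U)
 \<and> (\<forall>u\<in>U. even (u + Min U + card {v\<in>U. v<u}))"

lemma Inv_0: "Inv X 0 {} {}"
  unfolding Inv_def by (simp add: gamma_def)

lemma Inv_gap: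
  assumes I: "Inv X y B U" and c: "card U = 0" and nx: "Suc y \<notin> X"
  shows "Inv X (Suc y) B U"
proof -
  have fU: "finite U" using I unfolding Inv_def by (meson finite_atLeastAtMost finite_subset)
  hence U0: "U = {}" using c by simp
  have ok: "\<forall>p\<in>B. okp y p" using I unfolding Inv_def by auto
  have e: "{p\<in>B. Suc y \<in> I2 p} = {}"
    using ok okp_mem by (fastforce simp: I2_def)
  have "X \<inter> {1..Suc y} = X \<inter> {1..y}" using nx by (auto simp: le_Suc_eq)
  moreover have "\<forall>x\<in>{1..Suc y}. (x\<in>X) = odd (card {p\<in>B. x\<in>I2 p} + card {u\<in>U. u\<le>x})"
  proof
    fix x assume x: "x \<in> {1..Suc y}"
    show "(x\<in>X) = odd (card {p\<in>B. x\<in>I2 p} + card {u\<in>U. u\<le>x})"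
    proof (cases "x = Suc y")
      case True
      have "card {p\<in>B. Suc y \<in> I2 p} = 0" by (subst e) simp
      thus ?thesis using True nx U0 by simp
    next
      case False thus ?thesis using x I unfolding Inv_def by (auto simp: le_Suc_eq)
    qed
  qed
  ultimately show ?thesis using I U0 okp_mono unfolding Inv_def by (auto simp: le_Suc_eq)
qed

lemma okp_I2: "okp y p \<Longrightarrow> x \<in> I2 p \<Longrightarrow> 1 \<le> x \<and> x \<le> y"
  by (erule okpE) (auto simp: I2_def)

lemma okp_in: "okp y p \<Longrightarrow> x \<in> p \<Longrightarrow> x \<in> I2 p"
  by (erule okpE) (auto simp: I2_def)

lemma okp_notin: "\<forall>p\<in>B. okp y p \<Longrightarrow> y < z \<Longrightarrow> z \<notin> \<Union>B \<and> {p\<in>B. z \<in> I2 p} = {}"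
proof -
  assume ok: "\<forall>p\<in>B. okp y p" and yz: "y < z"
  have "z \<notin> I2 p" if "p \<in> B" for p using okp_I2[of y p z] ok that yz by auto
  moreover have "z \<notin> p" if "p \<in> B" for p using okp_in[of y p z] ok that \<open>\<And>p. p \<in> B \<Longrightarrow> z \<notin> I2 p\<close> by blast
  ultimately show ?thesis by auto
qed

lemma Inv_push:
  assumes I: "Inv X y B U" and nc: "\<not>(card U = 0 \<and> Suc y \<notin> X)" and ev: "even (card U) = (Suc y \<in> X)"
  shows "Inv X (Suc y) B (insert (Suc y) U)"
proof -
  have fB: "finite B" and ok: "\<forall>p\<in>B. okp y p" and dj: "\<forall>p\<in>B. \<forall>q\<in>B. p\<noteq>q \<longrightarrow> p\<inter>q={}"
    and Us: "U \<subseteq> {1..y}" and Ud: "U \<inter> \<Union>B = {}" and cv: "\<forall>p\<in>B. cov2 B {Min p<..<Max p}"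
    and J4: "\<forall>u\<in>U. \<forall>v. (v\<in>U \<or> v = Suc y) \<longrightarrow> u < v \<longrightarrow> (\<forall>w\<in>U. \<not>(u<w \<and> w<v)) \<longrightarrow> cov2 B {u<..<v}"
    and J5: "\<forall>x\<in>{1..y}. (x\<in>X) = odd (card {p\<in>B. x\<in>I2 p} + card {u\<in>U. u\<le>x})"
    and J6: "\<forall>u\<in>U. (u\<in>X) = even (card {v\<in>U. v<u})"
    and J7: "gamma (X \<inter> {1..y}) = gamma (X \<inter> U)"
    and J8: "\<forall>u\<in>U. even (u + Min U + card {v\<in>U. v<u})"
    using I unfolding Inv_def by auto
  define y' where "y' = Suc y"
  define U' where "U' = insert y' U"
  have fU: "finite U" using Us finite_subset by blast
  have ynU: "y' \<notin> U" using Us y'_def by auto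
  have ynB: "y' \<notin> \<Union>B" using okp_notin[OF ok, of y'] y'_def by simp
  have ltU: "\<And>u. u \<in> U \<Longrightarrow> u < y'" using Us y'_def by auto
  have cU': "card U' = Suc (card U)" using fU ynU U'_def by simp
  have e0: "{p\<in>B. y' \<in> I2 p} = {}" using okp_notin[OF ok, of y'] y'_def by simp
  have c0: "card {p\<in>B. y' \<in> I2 p} = 0" by (subst e0) simp
  have J4': "\<forall>u\<in>U'. \<forall>v. (v\<in>U' \<or> v = Suc y') \<longrightarrow> u < v \<longrightarrow> (\<forall>w\<in>U'. \<not>(u<w \<and> w<v)) \<longrightarrow> cov2 B {u<..<v}"
  proof (intro ballI allI impI)
    fix u v assume u: "u \<in> U'" and v: "v \<in> U' \<or> v = Suc y'" and uv: "u < v" and nw: "\<forall>w\<in>U'. \<not>(u<w \<and> w<v)"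
    show "cov2 B {u<..<v}"
    proof (cases "u = y'")
      case True
      have "v \<notin> U" using ltU[of v] True uv by auto
      hence "v = Suc y'" using v uv True U'_def by auto
      hence "{u<..<v} = {}" using True by auto
      thus ?thesis using cov2_empty by simp
    next
      case False
      hence uU: "u \<in> U" using u U'_def by auto
      show ?thesis
      proof (cases "v = y'")
        case True
        have "\<forall>w\<in>U. \<not>(u<w \<and> w<Suc y)" using nw True U'_def y'_def by auto
        thus ?thesis using J4[rule_format, OF uU, of "Suc y"] uv True y'_def by auto
      next
        case False
        have "v \<noteq> Suc y'"
        proof
          assume "v = Suc y'"
          hence "u < y' \<and> y' < v" using ltU[OF uU] by auto
          thus False using nw U'_def by auto
        qed
        hence "v \<in> U" using v False U'_def by auto
        have "\<forall>w\<in>U. \<not>(u<w \<and> w<v)" using nw U'_def by auto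
        thus ?thesis using J4[rule_format, OF uU, of v] uv \<open>v \<in> U\<close> by auto
      qed
    qed
  qed
  have J5': "\<forall>x\<in>{1..y'}. (x\<in>X) = odd (card {p\<in>B. x\<in>I2 p} + card {u\<in>U'. u\<le>x})"
  proof
    fix x assume x: "x \<in> {1..y'}"
    show "(x\<in>X) = odd (card {p\<in>B. x\<in>I2 p} + card {u\<in>U'. u\<le>x})"
    proof (cases "x = y'")
      case True
      have "{u\<in>U'. u\<le>x} = U'" using True U'_def by (auto dest: ltU)
      thus ?thesis using True c0 cU' ev y'_def by simp
    next
      case False
      hence "x \<in> {1..y}" using x y'_def by auto
      moreover have "{u\<in>U'. u\<le>x} = {u\<in>U. u\<le>x}" using False x U'_def by auto
      ultimately show ?thesis using J5 by simp
    qed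
  qed
  have J6': "\<forall>u\<in>U'. (u\<in>X) = even (card {v\<in>U'. v<u})"
  proof
    fix u assume u: "u \<in> U'"
    show "(u\<in>X) = even (card {v\<in>U'. v<u})"
    proof (cases "u = y'")
      case True
      have "{v\<in>U'. v<u} = U" using True U'_def by (auto dest: ltU)
      thus ?thesis using True ev y'_def by simp
    next
      case False
      hence "u \<in> U" using u U'_def by auto
      moreover have "{v\<in>U'. v<u} = {v\<in>U. v<u}" using \<open>u \<in> U\<close> U'_def by (auto dest: ltU)
      ultimately show ?thesis using J6 by simp
    qed
  qed
  have J7': "gamma (X \<inter> {1..y'}) = gamma (X \<inter> U')"
  proof (cases "y' \<in> X")
    case True
    have a: "X \<inter> {1..y'} = insert y' (X \<inter> {1..y})" using True y'_def by (auto simp: le_Suc_eq)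
    have b: "X \<inter> U' = insert y' (X \<inter> U)" using True U'_def by auto
    show ?thesis unfolding a b using J7 ynU fU
      by (subst gamma_insert, simp, simp add: y'_def)+ simp
  next
    case False
    have a: "X \<inter> {1..y'} = X \<inter> {1..y}" using False y'_def by (auto simp: le_Suc_eq)
    have b: "X \<inter> U' = X \<inter> U" using False U'_def by auto
    show ?thesis unfolding a b using J7 by simp
  qed
  have J8': "\<forall>u\<in>U'. even (u + Min U' + card {v\<in>U'. v<u})"
  proof (cases "U = {}")
    case True
    have e: "{v\<in>U'. v < y'} = {}" using True U'_def by auto
    have m: "Min U' = y'" using True U'_def by simp
    show ?thesis
    proof
      fix u assume "u \<in> U'"
      hence uy: "u = y'" using True U'_def by simp
      show "even (u + Min U' + card {v\<in>U'. v<u})" unfolding uy m e by simp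
    qed
  next
    case False
    have "Min U < y'" using ltU[OF Min_in[OF fU False]] .
    moreover have "Min U' = min y' (Min U)" unfolding U'_def using fU False by (rule Min_insert)
    ultimately have mn: "Min U' = Min U" by simp
    have mU: "Max U \<in> U" using False fU by simp
    have "\<forall>w\<in>U. \<not>(Max U < w \<and> w < Suc y)" using fU by (auto dest: Max_ge)
    moreover have "Max U < Suc y" using mU Us by auto
    ultimately have cvm: "cov2 B {Max U<..<Suc y}"
      using J4[rule_format, OF mU, of "Suc y"] by simp
    have "even (card {Max U<..<Suc y})" using cov2_even[of B y, OF _ cvm] ok by blast
    hence e1: "even (y - Max U)" by simp
    have cM: "card {v\<in>U. v < Max U} = card U - 1"
    proof -
      have "{v\<in>U. v < Max U} = U - {Max U}" using fU by (auto simp: order.strict_iff_order)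
      thus ?thesis using mU fU by simp
    qed
    have e2: "even (Max U + Min U + (card U - 1))" using J8 mU cM by auto
    have cpos: "card U \<ge> 1" using False fU by (simp add: Suc_le_eq card_gt_0_iff)
    have MU: "Max U \<le> y" using mU Us by auto
    have "even (y' + Min U + card U)"
      using e1 e2 cpos MU unfolding y'_def by presburger
    show ?thesis
    proof
      fix u assume u: "u \<in> U'"
      show "even (u + Min U' + card {v\<in>U'. v<u})"
      proof (cases "u = y'")
        case True
        have "{v\<in>U'. v<u} = U" using True U'_def by (auto dest: ltU)
        thus ?thesis using True mn \<open>even (y' + Min U + card U)\<close> by simp
      next
        case False
        hence "u \<in> U" using u U'_def by auto
        moreover have "{v\<in>U'. v<u} = {v\<in>U. v<u}" using \<open>u \<in> U\<close> U'_def by (auto dest: ltU)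
        ultimately show ?thesis using J8 mn by simp
      qed
    qed
  qed
  have "U' \<subseteq> {1..y'}" using Us U'_def y'_def by auto
  moreover have "U' \<inter> \<Union>B = {}" using Ud ynB U'_def by auto
  moreover have "\<forall>p\<in>B. okp y' p" using ok okp_mono y'_def by auto
  ultimately show ?thesis unfolding Inv_def using fB dj cv J4' J5' J6' J7' J8'
    by (simp add: U'_def y'_def)
qed

lemma Inv_pop:
  assumes I: "Inv X y B U" and nc: "\<not>(card U = 0 \<and> Suc y \<notin> X)" and ev: "even (card U) \<noteq> (Suc y \<in> X)"
  shows "Inv X (Suc y) (insert {Max U, Suc y} B) (U - {Max U})"
proof -
  have fB: "finite B" and ok: "\<forall>p\<in>B. okp y p" and dj: "\<forall>p\<in>B. \<forall>q\<in>B. p\<noteq>q \<longrightarrow> p\<inter>q={}"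
    and Us: "U \<subseteq> {1..y}" and Ud: "U \<inter> \<Union>B = {}" and cv: "\<forall>p\<in>B. cov2 B {Min p<..<Max p}"
    and J4: "\<forall>u\<in>U. \<forall>v. (v\<in>U \<or> v = Suc y) \<longrightarrow> u < v \<longrightarrow> (\<forall>w\<in>U. \<not>(u<w \<and> w<v)) \<longrightarrow> cov2 B {u<..<v}"
    and J5: "\<forall>x\<in>{1..y}. (x\<in>X) = odd (card {p\<in>B. x\<in>I2 p} + card {u\<in>U. u\<le>x})"
    and J6: "\<forall>u\<in>U. (u\<in>X) = even (card {v\<in>U. v<u})"
    and J7: "gamma (X \<inter> {1..y}) = gamma (X \<inter> U)"
    and J8: "\<forall>u\<in>U. even (u + Min U + card {v\<in>U. v<u})"
    using I unfolding Inv_def by auto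
  define y' where "y' = Suc y"
  define u0 where "u0 = Max U"
  define p where "p = {u0, y'}"
  define B' where "B' = insert p B"
  define U' where "U' = U - {u0}"
  have fU: "finite U" using Us finite_subset by blast
  have cU0: "card U \<noteq> 0" using nc ev by auto
  hence Une: "U \<noteq> {}" by auto
  have mU: "u0 \<in> U" using fU Une u0_def by simp
  have u0y: "u0 \<le> y" "1 \<le> u0" using mU Us by auto
  have geU: "\<And>z. z \<in> U \<Longrightarrow> z \<le> u0" using fU u0_def by simp
  have yX: "(y' \<in> X) = odd (card U)" using ev y'_def by auto
  have "\<forall>w\<in>U. \<not>(u0 < w \<and> w < Suc y)" using geU by (auto simp: not_less)
  moreover have "u0 < Suc y" using u0y by auto
  ultimately have cvm: "cov2 B {u0<..<Suc y}"
    using J4[rule_format, OF mU, of "Suc y"] by simp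
  have "even (card {u0<..<Suc y})" using cov2_even[of B y, OF _ cvm] ok by blast
  hence e1: "even (y - u0)" by simp
  have Minp: "Min p = u0" and Maxp: "Max p = y'" using u0y by (auto simp: p_def y'_def)
  have okpp: "okp y' p" unfolding okp_def p_def using u0y e1 y'_def
    by (intro exI[of _ u0] exI[of _ y']) auto
  have ynB: "y' \<notin> \<Union>B" using okp_notin[OF ok, of y'] y'_def by simp
  have e0: "{q\<in>B. y' \<in> I2 q} = {}" using okp_notin[OF ok, of y'] y'_def by simp
  have u0B: "u0 \<notin> \<Union>B" using Ud mU by auto
  have pq: "p \<inter> q = {}" if "q \<in> B" for q using ynB u0B that p_def by auto
  have pnB: "p \<notin> B" using pq by (auto simp: p_def)
  have ynU: "y' \<notin> U" using Us y'_def by auto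
  have okB': "\<forall>q\<in>B'. okp y' q" using ok okp_mono okpp B'_def y'_def by auto
  have djB': "\<forall>q1\<in>B'. \<forall>q2\<in>B'. q1\<noteq>q2 \<longrightarrow> q1\<inter>q2={}"
    using dj pq B'_def by blast
  have Us': "U' \<subseteq> {1..y'}" using Us U'_def y'_def by auto
  have Ud': "U' \<inter> \<Union>B' = {}" using Ud ynU U'_def B'_def p_def by auto
  have cvB': "\<forall>q\<in>B'. cov2 B' {Min q<..<Max q}"
  proof
    fix q assume "q \<in> B'"
    show "cov2 B' {Min q<..<Max q}"
    proof (cases "q = p")
      case True
      thus ?thesis using cvm Minp Maxp cov2_mono[of B _ B'] B'_def y'_def by auto
    next
      case False
      hence "q \<in> B" using \<open>q \<in> B'\<close> B'_def by auto
      thus ?thesis using cv cov2_mono[of B _ B'] B'_def by auto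
    qed
  qed
  have J4': "\<forall>w\<in>U'. \<forall>v. (v\<in>U' \<or> v = Suc y') \<longrightarrow> w < v \<longrightarrow> (\<forall>z\<in>U'. \<not>(w<z \<and> z<v)) \<longrightarrow> cov2 B' {w<..<v}"
  proof (intro ballI allI impI)
    fix w v assume w: "w \<in> U'" and v: "v \<in> U' \<or> v = Suc y'" and wv: "w < v" and nz: "\<forall>z\<in>U'. \<not>(w<z \<and> z<v)"
    have wU: "w \<in> U" and wu0: "w < u0" using w U'_def geU[of w] by auto
    show "cov2 B' {w<..<v}"
    proof (cases "v = Suc y'")
      case False
      hence vU: "v \<in> U" "v \<noteq> u0" using v U'_def by auto
      have "\<forall>z\<in>U. \<not>(w<z \<and> z<v)"
      proof (intro ballI notI)
        fix z assume "z \<in> U" "w<z \<and> z<v"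
        moreover have "v \<le> u0" using geU vU by auto
        ultimately have "z \<in> U'" using U'_def by auto
        thus False using nz \<open>w<z \<and> z<v\<close> by auto
      qed
      hence "cov2 B {w<..<v}" using J4[rule_format, OF wU, of v] vU wv by auto
      thus ?thesis using cov2_mono[of B _ B'] B'_def by auto
    next
      case True
      have "\<forall>z\<in>U. \<not>(w<z \<and> z<u0)"
      proof (intro ballI notI)
        fix z assume "z \<in> U" "w<z \<and> z<u0"
        hence "z \<in> U'" "z < v" using U'_def True u0y y'_def by auto
        thus False using nz \<open>w<z \<and> z<u0\<close> by auto
      qed
      hence "cov2 B {w<..<u0}" using J4[rule_format, OF wU, of u0] mU wu0 by auto
      hence c1: "cov2 B' {w<..<u0}" using cov2_mono[of B _ B'] B'_def by auto
      have I2p: "I2 p = {u0..y'}" using Minp Maxp by (simp add: I2_def)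
      have "cov2 B' ({w<..<u0} \<union> I2 p)"
        by (rule cov2_add[OF c1]) (use u0y in \<open>auto simp: B'_def I2p y'_def\<close>)
      moreover have "{w<..<u0} \<union> I2 p = {w<..<v}" using True wu0 I2p y'_def u0y by auto
      ultimately show ?thesis by simp
    qed
  qed
  have cU': "card U' = card U - 1" using fU mU U'_def by simp
  have J5': "\<forall>x\<in>{1..y'}. (x\<in>X) = odd (card {q\<in>B'. x\<in>I2 q} + card {u\<in>U'. u\<le>x})"
  proof
    fix x assume x: "x \<in> {1..y'}"
    show "(x\<in>X) = odd (card {q\<in>B'. x\<in>I2 q} + card {u\<in>U'. u\<le>x})"
    proof (cases "x = y'")
      case True
      have "{q\<in>B'. x\<in>I2 q} = {p}" using e0 True Maxp Minp u0y B'_def y'_def by (auto simp: I2_def)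
      moreover have "{u\<in>U'. u\<le>x} = U'" using True Us U'_def y'_def by auto
      ultimately show ?thesis using True cU' cU0 yX by simp
    next
      case False
      hence xy: "x \<in> {1..y}" using x y'_def by auto
      define S where "S = {q\<in>B. x\<in>I2 q}"
      have pS: "p \<notin> S" using pnB S_def by auto
      have fS: "finite S" using fB S_def by auto
      show ?thesis
      proof (cases "u0 \<le> x")
        case True
        have a: "{q\<in>B'. x\<in>I2 q} = insert p S" using True xy Minp Maxp S_def B'_def y'_def by (auto simp: I2_def)
        have b: "{u\<in>U'. u\<le>x} = {u\<in>U. u\<le>x} - {u0}" using U'_def by auto
        have c: "u0 \<in> {u\<in>U. u\<le>x}" using True mU by auto
        have fu: "finite {u\<in>U. u\<le>x}" using fU by auto
        have "card {u\<in>U'. u\<le>x} = card {u\<in>U. u\<le>x} - 1" unfolding b using c fu by simp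
        moreover have "card {u\<in>U. u\<le>x} \<ge> 1" using c fu by (metis One_nat_def Suc_leI card_gt_0_iff empty_iff)
        ultimately show ?thesis unfolding a using J5 xy pS fS S_def by simp
      next
        case False
        have a: "{q\<in>B'. x\<in>I2 q} = S" using False xy Minp Maxp S_def B'_def by (auto simp: I2_def)
        have b: "{u\<in>U'. u\<le>x} = {u\<in>U. u\<le>x}" using False U'_def by auto
        show ?thesis unfolding a b using J5 xy S_def by simp
      qed
    qed
  qed
  have J6': "\<forall>w\<in>U'. (w\<in>X) = even (card {v\<in>U'. v<w})"
  proof
    fix w assume w: "w \<in> U'"
    hence "w \<in> U" "w < u0" using U'_def geU[of w] by auto
    moreover have "{v\<in>U'. v<w} = {v\<in>U. v<w}" using \<open>w < u0\<close> U'_def by auto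
    ultimately show "(w\<in>X) = even (card {v\<in>U'. v<w})" using J6 by simp
  qed
  have lt0: "{v\<in>U. v<u0} = U'" using U'_def geU by (auto simp: order.strict_iff_order)
  have u0X: "(u0 \<in> X) = (y' \<in> X)"
    using J6 mU lt0 cU' cU0 yX by (simp add: even_diff_nat)
  have par: "even y' = odd u0" using e1 u0y y'_def by presburger
  have fU': "finite U'" using fU U'_def by auto
  have J7': "gamma (X \<inter> {1..y'}) = gamma (X \<inter> U')"
  proof (cases "y' \<in> X")
    case True
    have a: "X \<inter> {1..y'} = insert y' (X \<inter> {1..y})" using True y'_def by (auto simp: le_Suc_eq)
    have b: "X \<inter> U = insert u0 (X \<inter> U')" using True u0X mU U'_def by auto
    have g1: "gamma (X \<inter> {1..y'}) = gamma (X \<inter> {1..y}) + (if even y' then 1 else -1)"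
      unfolding a by (rule gamma_insert) (auto simp: y'_def)
    have g2: "gamma (X \<inter> U) = gamma (X \<inter> U') + (if even u0 then 1 else -1)"
      unfolding b by (rule gamma_insert) (use fU in \<open>auto simp: U'_def\<close>)
    show ?thesis using g1 g2 J7 par by auto
  next
    case False
    have a: "X \<inter> {1..y'} = X \<inter> {1..y}" using False y'_def by (auto simp: le_Suc_eq)
    have b: "X \<inter> U' = X \<inter> U" using False u0X U'_def by auto
    show ?thesis unfolding a b using J7 by simp
  qed
  have J8': "\<forall>w\<in>U'. even (w + Min U' + card {v\<in>U'. v<w})"
  proof
    fix w assume w: "w \<in> U'"
    hence wU: "w \<in> U" "w < u0" using U'_def geU[of w] by auto
    have "Min U \<le> w" using fU wU by simp
    hence "Min U \<in> U'" using Min_in[OF fU Une] wU U'_def by auto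
    hence mn: "Min U' = Min U" using fU' U'_def fU by (intro Min_eqI) auto
    have "{v\<in>U'. v<w} = {v\<in>U. v<w}" using wU U'_def by auto
    thus "even (w + Min U' + card {v\<in>U'. v<w})" using J8 wU mn by simp
  qed
  show ?thesis unfolding Inv_def
    using fB B'_def okB' djB' Us' Ud' cvB' J4' J5' J6' J7' J8'
    by (simp add: u0_def y'_def p_def U'_def B'_def)
qed

lemma Inv_run: "Inv X y (fst (run2 X y)) (snd (run2 X y))"
proof (induction y)
  case 0 thus ?case using Inv_0 by simp
next
  case (Suc y)
  obtain B U where r: "run2 X y = (B, U)" by (cases "run2 X y") auto
  have I: "Inv X y B U" using Suc r by simp
  have R: "run2 X (Suc y) = (if card U = 0 \<and> Suc y \<notin> X then (B, U)
    else if even (card U) = (Suc y \<in> X) then (B, insert (Suc y) U)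
    else (insert {Max U, Suc y} B, U - {Max U}))" using r by simp
  show ?case
  proof (cases "card U = 0 \<and> Suc y \<notin> X")
    case True
    have "run2 X (Suc y) = (B, U)" unfolding R by (simp only: if_P[OF True])
    thus ?thesis using Inv_gap[OF I] True by simp
  next
    case False
    show ?thesis
    proof (cases "even (card U) = (Suc y \<in> X)")
      case True
      have "run2 X (Suc y) = (B, insert (Suc y) U)" unfolding R by (simp only: if_not_P[OF False] if_P[OF True])
      thus ?thesis using Inv_push[OF I False True] by simp
    next
      case c2: False
      have "run2 X (Suc y) = (insert {Max U, Suc y} B, U - {Max U})"
        unfolding R by (simp only: if_not_P[OF False] if_not_P[OF c2])
      thus ?thesis using Inv_pop[OF I False c2] by simp
    qed
  qed
qed

lemma end_U:
  assumes I: "Inv X m B U" and g: "gamma (X \<inter> {1..m}) = 0"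
  shows "U = {}"
proof (rule ccontr)
  assume Une: "U \<noteq> {}"
  have Us: "U \<subseteq> {1..m}" and J6: "\<forall>u\<in>U. (u\<in>X) = even (card {v\<in>U. v<u})"
    and J7: "gamma (X \<inter> {1..m}) = gamma (X \<inter> U)"
    and J8: "\<forall>u\<in>U. even (u + Min U + card {v\<in>U. v<u})"
    using I unfolding Inv_def by auto
  have fU: "finite U" using Us finite_subset by blast
  define A where "A = X \<inter> U"
  have fA: "finite A" using fU A_def by auto
  have gA: "gamma A = 0" using g J7 A_def by simp
  define m0 where "m0 = Min U"
  have m0U: "m0 \<in> U" using fU Une m0_def by simp
  have "{v\<in>U. v<m0} = {}"
  proof (rule ccontr)
    assume "{v\<in>U. v<m0} \<noteq> {}"
    then obtain v where v: "v \<in> U" "v < m0" by auto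
    moreover have "m0 \<le> v" using fU m0_def v(1) by simp
    ultimately show False by simp
  qed
  hence c0: "card {v\<in>U. v<m0} = 0" by (simp only: card.empty)
  have "(m0 \<in> X) = even (card {v\<in>U. v<m0})" using J6 m0U by blast
  hence "m0 \<in> X" unfolding c0 by simp
  hence m0A: "m0 \<in> A" using m0U A_def by simp
  have cA: "card A > 0" using fA m0A card_gt_0_iff by blast
  have par: "even (a + m0)" if "a \<in> A" for a
  proof -
    have "a \<in> U" "a \<in> X" using that A_def by auto
    hence "even (card {v\<in>U. v<a})" using J6 by auto
    moreover have "even (a + m0 + card {v\<in>U. v<a})" using J8 \<open>a \<in> U\<close> m0_def by auto
    ultimately show ?thesis by simp
  qed
  show False
  proof (cases "even m0")
    case True
    hence "\<forall>a\<in>A. even a" using par by fastforce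
    hence "gamma A = int (card A)" by (rule gamma_all_even)
    thus False using gA cA by simp
  next
    case False
    hence "\<forall>a\<in>A. odd a" using par by fastforce
    hence "gamma A = - int (card A)" by (rule gamma_all_odd)
    thus False using gA cA by simp
  qed
qed

lemma run_SS_m:
  assumes G: "B \<in> GS m"
  shows "run2 (SS B) m = (B, {})"
proof -
  have "\<And>p. p \<in> B \<Longrightarrow> Max p \<le> m" using GS_D(2)[OF G] okp_mem by blast
  hence "{p\<in>B. Max p \<le> m} = B" "{p\<in>B. Min p \<le> m \<and> m < Max p} = {}" by (auto simp: not_less)
  thus ?thesis using run_SS[OF G, of m] by simp
qed

lemma SS_sub:
  assumes G: "B \<in> GS m"
  shows "SS B \<subseteq> {1..m}"
proof
  fix x assume "x \<in> SS B"
  hence "card {p\<in>B. x \<in> I2 p} \<noteq> 0" unfolding SS_def by (metis (no_types, lifting) mem_Collect_eq odd_card_imp_not_empty card.empty)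
  then obtain p where "p \<in> B" "x \<in> I2 p" by (metis (no_types, lifting) Collect_empty_eq card.empty)
  thus "x \<in> {1..m}" using okp_I2 GS_D(2)[OF G] by fastforce
qed

lemma SS_gamma:
  assumes G: "B \<in> GS m"
  shows "gamma (SS B) = 0"
proof -
  have "Inv (SS B) m B {}" using Inv_run[of "SS B" m] run_SS_m[OF G] by simp
  hence "gamma (SS B \<inter> {1..m}) = gamma (SS B \<inter> {})" unfolding Inv_def by blast
  moreover have "gamma (SS B \<inter> {}) = 0" by (simp add: gamma_def)
  moreover have "SS B \<inter> {1..m} = SS B" using SS_sub[OF G] by auto
  ultimately show ?thesis by simp
qed

lemma SS_inj: "inj_on SS (GS m)"
proof (rule inj_onI)
  fix B B' assume "B \<in> GS m" "B' \<in> GS m" "SS B = SS B'"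
  hence "(B, {}) = (B', ({}::nat set))" using run_SS_m[of B m] run_SS_m[of B' m] by metis
  thus "B = B'" by simp
qed

lemma SS_surj:
  assumes X: "X \<subseteq> {1..m}" and g: "gamma X = 0"
  shows "\<exists>B\<in>GS m. SS B = X"
proof -
  define B where "B = fst (run2 X m)"
  define U where "U = snd (run2 X m)"
  have I: "Inv X m B U" using Inv_run B_def U_def by simp
  have "X \<inter> {1..m} = X" using X by auto
  hence U0: "U = {}" using end_U[OF I] g by simp
  have fB: "finite B" and ok: "\<forall>p\<in>B. okp m p" and dj: "\<forall>p\<in>B. \<forall>q\<in>B. p\<noteq>q \<longrightarrow> p\<inter>q={}"
    and cv: "\<forall>p\<in>B. cov2 B {Min p<..<Max p}"
    and J5: "\<forall>x\<in>{1..m}. (x\<in>X) = odd (card {p\<in>B. x\<in>I2 p} + card {u\<in>U. u\<le>x})"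
    using I unfolding Inv_def by auto
  have G: "B \<in> GS m" unfolding GS_def using fB ok dj cv by auto
  have "SS B = X"
  proof (rule set_eqI)
    fix x
    show "x \<in> SS B \<longleftrightarrow> x \<in> X"
    proof (cases "x \<in> {1..m}")
      case True
      thus ?thesis using J5 U0 unfolding SS_def by simp
    next
      case False
      hence "x \<notin> X" using X by auto
      moreover have "x \<notin> SS B" using SS_sub[OF G] False by auto
      ultimately show ?thesis by simp
    qed
  qed
  thus ?thesis using G by auto
qed

lemma SS_bij: "bij_betw SS (GS m) {X. X \<subseteq> {1..m} \<and> gamma X = 0}"
  unfolding bij_betw_def
proof
  show "inj_on SS (GS m)" by (rule SS_inj)
  show "SS ` GS m = {X. X \<subseteq> {1..m} \<and> gamma X = 0}"
    using SS_sub SS_gamma SS_surj by blast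
qed

lemma SS_last:
  assumes G: "B \<in> GS m"
  shows "(m \<in> \<Union>B) = (m \<in> SS B)"
proof
  note ok = GS_D(2)[OF G] and dj = GS_D(4)[OF G] and fin = GS_D(1)[OF G]
  assume "m \<in> \<Union>B"
  then obtain p where p: "p \<in> B" "m \<in> p" by auto
  obtain a b where ab: "p = {a,b}" "a < b" "b \<le> m" "Min p = a" "Max p = b" using ok[OF p(1)] by (rule okpE)
  have mb: "Max p = m" using ab p by auto
  have "{q\<in>B. m \<in> I2 q} = {p}"
  proof (rule set_eqI, rule iffI)
    fix q assume q: "q \<in> {q\<in>B. m \<in> I2 q}"
    hence "Max q = m" using okp_mem[OF ok[of q]] by (auto simp: I2_def)
    hence "m \<in> q" using okp_mem[OF ok[of q]] q by auto
    thus "q \<in> {p}" using same_pair[where B=B and p=q and q=p and x=m, OF dj] q p by auto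
  next
    fix q assume "q \<in> {p}"
    thus "q \<in> {q\<in>B. m \<in> I2 q}" using p mb okp_mem[OF ok[of p]] by (auto simp: I2_def)
  qed
  thus "m \<in> SS B" unfolding SS_def by simp
next
  note ok = GS_D(2)[OF G]
  assume "m \<in> SS B"
  hence "card {p\<in>B. m \<in> I2 p} \<noteq> 0" unfolding SS_def by (metis (no_types, lifting) mem_Collect_eq odd_card_imp_not_empty card.empty)
  then obtain p where p: "p \<in> B" "m \<in> I2 p" by (metis (no_types, lifting) Collect_empty_eq card.empty)
  hence "Max p = m" using okp_mem[OF ok[of p]] by (auto simp: I2_def)
  thus "m \<in> \<Union>B" using okp_mem[OF ok[of p]] p by auto
qed

lemma odd_pair_facts:
  assumes "p = {a,b}" "a < b"
  shows "Min p = a" "Max p = b"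
  using assms by auto

lemma wr_odd: "odd (Max p - Min p) \<Longrightarrow> wr p = (Min p, Max p)"
  unfolding wr_def by simp

lemma ivl_odd: "odd (Max p - Min p) \<Longrightarrow> ivl p = I2 p"
  unfolding ivl_def I2_def using wr_odd by simp

lemma dbr_odd: "odd (Max p - Min p) \<Longrightarrow> Min p < Max p \<Longrightarrow> dbr N p = I2 p"
  unfolding dbr_def I2_def using wr_odd by simp

lemma B1_all: "\<forall>p\<in>B. odd (Max p - Min p) \<Longrightarrow> B1 B = B"
  unfolding B1_def by auto

lemma B0_none: "\<forall>p\<in>B. odd (Max p - Min p) \<Longrightarrow> B0 B = {}"
  unfolding B0_def by auto

lemma zc_cov2:
  assumes o: "\<forall>p\<in>B. odd (Max p - Min p)"
  shows "zero_cov B X = cov2 B X"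
proof -
  have e: "\<And>C. C \<subseteq> B \<Longrightarrow> disjoint_family_on ivl C = disjoint_family_on I2 C \<and> ivl ` C = I2 ` C"
  proof -
    fix C assume "C \<subseteq> B"
    hence eq: "\<And>p. p \<in> C \<Longrightarrow> ivl p = I2 p" using o ivl_odd by blast
    show "disjoint_family_on ivl C = disjoint_family_on I2 C \<and> ivl ` C = I2 ` C"
      unfolding disjoint_family_on_def using eq by auto
  qed
  show ?thesis unfolding zero_cov_def cov2_def B1_all[OF o]
  proof
    assume "\<exists>C\<subseteq>B. finite C \<and> disjoint_family_on ivl C \<and> X = \<Union> (ivl ` C)"
    then obtain C where "C \<subseteq> B" "finite C \<and> disjoint_family_on ivl C \<and> X = \<Union> (ivl ` C)" by blast
    thus "\<exists>C\<subseteq>B. finite C \<and> disjoint_family_on I2 C \<and> X = \<Union> (I2 ` C)" using e[of C] by metis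
  next
    assume "\<exists>C\<subseteq>B. finite C \<and> disjoint_family_on I2 C \<and> X = \<Union> (I2 ` C)"
    then obtain C where "C \<subseteq> B" "finite C \<and> disjoint_family_on I2 C \<and> X = \<Union> (I2 ` C)" by blast
    thus "\<exists>C\<subseteq>B. finite C \<and> disjoint_family_on ivl C \<and> X = \<Union> (ivl ` C)" using e[of C] by metis
  qed
qed

lemma GS_odd: "B \<in> GS m \<Longrightarrow> \<forall>p\<in>B. odd (Max p - Min p)"
  using GS_D(2) by (fastforce elim: okpE)

lemma X0p_GS:
  assumes N: "N \<ge> 3"
  shows "X0p N = GS (N - 1)"
proof (rule set_eqI, rule iffI)
  fix B assume B: "B \<in> X0p N"
  have BX: "B \<in> Xplus N" and c0: "card (B0 B) = 0" using B unfolding X0p_def by auto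
  have BS: "B \<in> starPN N" and c2: "condII N B" using BX unfolding Xplus_def by auto
  have PN: "B \<in> PN N" and st: "\<forall>p\<in>B1 B. zero_cov B {fst (wr p)<..<snd (wr p)}"
    using BS unfolding starPN_def by auto
  have fB: "finite B" and ps: "\<forall>p\<in>B. p \<subseteq> {1..N} \<and> card p = 2"
    and dj: "\<forall>p\<in>B. \<forall>q\<in>B. p \<noteq> q \<longrightarrow> p \<inter> q = {}"
    using PN unfolding PN_def by auto
  have "B0 B = {}" using c0 fB unfolding B0_def by simp
  hence o: "\<forall>p\<in>B. odd (Max p - Min p)" unfolding B0_def by auto
  have NS: "N \<notin> \<Union>B" using c2 unfolding condII_def supp_def by simp
  have okB: "okp (N - 1) p" if "p \<in> B" for p
  proof -
    have "card p = 2" using ps that by blast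
    then obtain x y where xy: "p = {x,y}" "x \<noteq> y" unfolding card_2_iff by blast
    have "\<exists>a b. p = {a,b} \<and> a < b"
    proof (cases "x < y")
      case True thus ?thesis using xy by blast
    next
      case False
      hence "y < x" using xy by simp
      thus ?thesis using xy by (intro exI[of _ y] exI[of _ x]) auto
    qed
    then obtain a b where ab: "p = {a,b}" "a < b" by blast
    have "b \<noteq> N" using NS that ab by auto
    moreover have "a \<in> {1..N}" "b \<in> {1..N}" using ps that ab by auto
    moreover have "odd (b - a)" using o that ab by auto
    ultimately show ?thesis unfolding okp_def using ab by (intro exI[of _ a] exI[of _ b]) auto
  qed
  have "\<forall>p\<in>B. cov2 B {Min p<..<Max p}"
  proof
    fix p assume "p \<in> B"
    hence "zero_cov B {fst (wr p)<..<snd (wr p)}" using st B1_all[OF o] by auto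
    thus "cov2 B {Min p<..<Max p}" using zc_cov2[OF o] wr_odd o \<open>p \<in> B\<close> by auto
  qed
  thus "B \<in> GS (N - 1)" unfolding GS_def using fB okB dj by auto
next
  fix B assume G: "B \<in> GS (N - 1)"
  note ok = GS_D(2)[OF G]
  have o: "\<forall>p\<in>B. odd (Max p - Min p)" using GS_odd[OF G] .
  have PN: "B \<in> PN N"
  proof -
    have "p \<subseteq> {1..N} \<and> card p = 2" if "p \<in> B" for p
      using ok[OF that] by (elim okpE) auto
    thus ?thesis unfolding PN_def using GS_D[OF G] by auto
  qed
  have B0e: "B0 B = {}" using B0_none[OF o] .
  have "\<forall>p\<in>B1 B. zero_cov B {fst (wr p)<..<snd (wr p)}"
    using GS_D(3)[OF G] zc_cov2[OF o] wr_odd o B1_all[OF o] by auto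
  moreover have "seqok B []" unfolding seqok_def Let_def using B0e by simp
  ultimately have "B \<in> starPN N" unfolding starPN_def using PN by auto
  moreover have "N \<notin> \<Union>B"
  proof
    assume "N \<in> \<Union>B"
    then obtain p where "p \<in> B" "N \<in> p" by auto
    thus False using ok[of p] N by (auto elim!: okpE)
  qed
  hence "condII N B" unfolding condII_def supp_def sB_def using B0e by simp
  ultimately show "B \<in> X0p N" unfolding X0p_def Xplus_def using B0e by simp
qed

lemma eps_SS:
  assumes "B \<in> X0p N"
  shows "eps' N B = SS B"
proof -
  have "B \<in> Xplus N" "card (B0 B) = 0" using assms unfolding X0p_def by auto
  hence e: "eps' N B = ssum N B" unfolding eps'_def by simp
  have "B0 B = {}" using \<open>card (B0 B) = 0\<close> assms
    unfolding X0p_def Xplus_def starPN_def PN_def B0_def by auto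
  hence o: "\<forall>p\<in>B. odd (Max p - Min p)" unfolding B0_def by auto
  have fin: "\<forall>p\<in>B. card p = 2" using assms unfolding X0p_def Xplus_def starPN_def PN_def by auto
  have lt: "\<forall>p\<in>B. Min p < Max p"
  proof
    fix p assume "p \<in> B"
    have "card p = 2" using fin \<open>p \<in> B\<close> by blast
    then obtain x y where "p = {x,y}" "x \<noteq> y" unfolding card_2_iff by blast
    thus "Min p < Max p" by (auto simp: min_def max_def)
  qed
  have "\<And>x. {p\<in>B. x \<in> dbr N p} = {p\<in>B. x \<in> I2 p}" using dbr_odd o lt by auto
  thus ?thesis unfolding e ssum_def SS_def by simp
qed

lemma card_even_odd: "finite X \<Longrightarrow> card X = card {x\<in>X. even x} + card {x\<in>X. odd x}"
proof -
  assume f: "finite X"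
  have "X = {x\<in>X. even x} \<union> {x\<in>X. odd x}" by auto
  moreover have "card ({x\<in>X. even x} \<union> {x\<in>X. odd x}) = card {x\<in>X. even x} + card {x\<in>X. odd x}"
    using f by (intro card_Un_disjoint) auto
  ultimately show ?thesis by simp
qed

lemma E0p_G:
  assumes N: "N \<ge> 3"
  shows "E0p N = {X. X \<subseteq> {1..N - 1} \<and> gamma X = 0}"
proof (rule set_eqI, rule iffI)
  fix X assume "X \<in> E0p N"
  hence "X \<subseteq> {1..N}" "N \<notin> X" "gamma X = 0" unfolding E0p_def EN_def by auto
  moreover have "X \<subseteq> {1..N - 1}" using calculation(1,2) by (auto simp: subset_iff) (metis le_antisym le_diff_conv2 Suc_leI le_eq_less_or_eq One_nat_def add.commute linorder_not_le plus_1_eq_Suc Suc_pred le_zero_eq not_less0)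
  ultimately show "X \<in> {X. X \<subseteq> {1..N - 1} \<and> gamma X = 0}" by simp
next
  fix X assume X: "X \<in> {X. X \<subseteq> {1..N - 1} \<and> gamma X = 0}"
  hence s: "X \<subseteq> {1..N - 1}" and g: "gamma X = 0" by auto
  have f: "finite X" using s finite_subset by blast
  have "card {x\<in>X. even x} = card {x\<in>X. odd x}" using g unfolding gamma_def by simp
  hence "even (card X)" using card_even_odd[OF f] by simp
  moreover have "X \<subseteq> {1..N}"
  proof
    fix x assume "x \<in> X"
    hence "x \<in> {1..N-1}" using s by blast
    thus "x \<in> {1..N}" by auto
  qed
  moreover have "N \<notin> X"
  proof
    assume "N \<in> X"
    hence "N \<in> {1..N-1}" using s by blast
    thus False using N by auto
  qed
  ultimately show "X \<in> E0p N" unfolding E0p_def EN_def using g by simp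
qed

lemma bij_restrict:
  assumes "bij_betw f A A'" "\<And>a. a \<in> A \<Longrightarrow> P a = Q (f a)"
  shows "bij_betw f {a\<in>A. P a} {b\<in>A'. Q b}"
  using assms unfolding bij_betw_def inj_on_def by (auto simp: image_iff)

theorem mainTheorem7:
  fixes N :: nat
  assumes "odd N" and "N \<ge> 3"
  shows "bij_betw (eps' N) (X0p' N) (E0p' N) \<and> bij_betw (eps' N) (X0p'' N) (E0p'' N)"
proof -
  define m where "m = N - 1"
  have m1: "m \<ge> 1" using assms m_def by simp
  have b: "bij_betw SS (X0p N) (E0p N)"
    using SS_bij[of m] X0p_GS[OF assms(2)] E0p_G[OF assms(2)] m_def by simp
  have last: "\<And>B. B \<in> X0p N \<Longrightarrow> (m \<in> supp B) = (m \<in> SS B)"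
    using SS_last X0p_GS[OF assms(2)] m_def supp_def by simp
  have b1: "bij_betw SS (X0p' N) (E0p' N)"
    unfolding X0p'_def E0p'_def m_def[symmetric]
    by (rule bij_restrict[OF b]) (use last in auto)
  have b2: "bij_betw SS (X0p'' N) (E0p'' N)"
    unfolding X0p''_def E0p''_def m_def[symmetric]
    by (rule bij_restrict[OF b]) (use last in auto)
  have c1: "bij_betw (eps' N) (X0p' N) (E0p' N) = bij_betw SS (X0p' N) (E0p' N)"
    by (rule bij_betw_cong) (auto simp: X0p'_def eps_SS)
  have c2: "bij_betw (eps' N) (X0p'' N) (E0p'' N) = bij_betw SS (X0p'' N) (E0p'' N)"
    by (rule bij_betw_cong) (auto simp: X0p''_def eps_SS)
  show ?thesis using b1 b2 c1 c2 by simp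
qed

end
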